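(* Let $n\ge2$, let $M$ be a nonderogatory $d\times d$ matrix with minimal polynomial $\mathbf p$, and let $\mathcal B$ be a generic maximal subalgebra of $\mathcal T_{n,d}[\mathcal P(M)]$. For $B\in\mathcal B$ write $B_j=\mathbf b_j(M)$ with $\mathbf b_j\in\mathbb C[X]$. Then: (i) for each $j\in\{\pm1,\dots,\pm(n-1)\}$ there exists $B\in\mathcal B$ with $B_j\neq0$; (ii) letting $\mathbf s_j$ be the (monic) greatest common divisor of $\mathbf p$ and all the $\mathbf b_j$, $B\in\mathcal B$, we have $\mathbf s_1=\dots=\mathbf s_{n-1}=:\mathbf s_+$ and $\mathbf s_{-1}=\dots=\mathbf s_{-(n-1)}=:\mathbf s_-$; consequently every $B\in\mathcal B$ can be written as $B_j=\mathbf s_+(M)\tilde{\mathbf b}_j(M)$ for $j\ge1$ and $B_j=\mathbf s_-(M)\tilde{\mathbf b}_j(M)$ for $j\le-1$, with $\tilde{\mathbf b}_j\in\mathbb C[X]$; (iii) there exists $A\in\mathcal B$ for which the polynomials $\tilde{\mathbf a}_j$ in (ii) can be chosen relatively prime to $\mathbf p$ for every $j=\pm1,\dots,\pm(n-1)$; (iv) $\mathbf s_+\mathbf s_-$ divides $\mathbf p$.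
   Context: A nonderogatory matrix is one whose minimal polynomial equals its characteristic polynomial; $\mathcal P(M)$ is the algebra of polynomials in $M$. $\mathcal T_{n,d}[\mathcal P(M)]$ is the set of $n\times n$ block Toeplitz matrices $(B_{i-j})_{i,j=0}^{n-1}$ with all $B_m\in\mathcal P(M)$. A maximal subalgebra of $\mathcal T_{n,d}[\mathcal P(M)]$ is a subalgebra (linear subspace closed under multiplication) contained in it and maximal under inclusion among such. Let $\mathfrak B_u$ be the set of $B\in\mathcal T_{n,d}[\mathcal P(M)]$ with $B_i=0$ for all $i\ge1$ (upper triangular) and $\mathfrak B_l$ the set with $B_i=0$ for all $i\le-1$ (lower triangular). An algebra is called generic if it is contained neither in $\mathfrak B_u$ nor in $\mathfrak B_l$. *)

theory Defs
  imports "Jordan_Normal_Form.Jordan_Normal_Form" "HOL-Computational_Algebra.Polynomial_Factorial" "HOL-Computational_Algebra.Field_as_Ring"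
begin

definition mat_poly_eval :: "nat \<Rightarrow> complex mat \<Rightarrow> complex poly \<Rightarrow> complex mat" where
  "mat_poly_eval d M q = fold_coeffs (\<lambda>a A. a \<cdot>\<^sub>m 1\<^sub>m d + M * A) q (0\<^sub>m d d)"

definition is_min_poly :: "nat \<Rightarrow> complex mat \<Rightarrow> complex poly \<Rightarrow> bool" where
  "is_min_poly d M q \<longleftrightarrow> monic q \<and> mat_poly_eval d M q = 0\<^sub>m d d \<and>
     (\<forall>r. r \<noteq> 0 \<and> mat_poly_eval d M r = 0\<^sub>m d d \<longrightarrow> degree q \<le> degree r)"

definition nonderogatory :: "nat \<Rightarrow> complex mat \<Rightarrow> bool" where
  "nonderogatory d M \<longleftrightarrow> is_min_poly d M (char_poly M)"

definition polys_in :: "nat \<Rightarrow> complex mat \<Rightarrow> complex mat set" where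
  "polys_in d M = {mat_poly_eval d M q | q. True}"

definition block_toeplitz :: "nat \<Rightarrow> nat \<Rightarrow> (int \<Rightarrow> complex mat) \<Rightarrow> complex mat" where
  "block_toeplitz n d B = mat (n*d) (n*d)
     (\<lambda>(r,c). B (int (r div d) - int (c div d)) $$ (r mod d, c mod d))"

definition toeplitz_set :: "nat \<Rightarrow> nat \<Rightarrow> complex mat \<Rightarrow> complex mat set" where
  "toeplitz_set n d M = {block_toeplitz n d B | B. \<forall>m. B m \<in> polys_in d M}"

definition toeplitz_upper :: "nat \<Rightarrow> nat \<Rightarrow> complex mat \<Rightarrow> complex mat set" where
  "toeplitz_upper n d M = {block_toeplitz n d B | B. (\<forall>m. B m \<in> polys_in d M) \<and>
      (\<forall>i\<ge>1. B i = 0\<^sub>m d d)}"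

definition toeplitz_lower :: "nat \<Rightarrow> nat \<Rightarrow> complex mat \<Rightarrow> complex mat set" where
  "toeplitz_lower n d M = {block_toeplitz n d B | B. (\<forall>m. B m \<in> polys_in d M) \<and>
      (\<forall>i\<le>-1. B i = 0\<^sub>m d d)}"

text \<open>The block B_j of a block Toeplitz matrix X (read off at block position (j,0) or (0,-j)).\<close>
definition toeplitz_block :: "nat \<Rightarrow> complex mat \<Rightarrow> int \<Rightarrow> complex mat" where
  "toeplitz_block d X j = mat d d (\<lambda>(r,c). X $$ (nat j * d + r, nat (- j) * d + c))"

definition is_subalgebra :: "nat \<Rightarrow> complex mat set \<Rightarrow> bool" where
  "is_subalgebra N S \<longleftrightarrow> S \<subseteq> carrier_mat N N \<and> 0\<^sub>m N N \<in> S \<and>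
     (\<forall>A\<in>S. \<forall>B\<in>S. A + B \<in> S \<and> A * B \<in> S) \<and> (\<forall>c. \<forall>A\<in>S. c \<cdot>\<^sub>m A \<in> S)"

definition maximal_subalgebra_in :: "nat \<Rightarrow> complex mat set \<Rightarrow> complex mat set \<Rightarrow> bool" where
  "maximal_subalgebra_in N T S \<longleftrightarrow> is_subalgebra N S \<and> S \<subseteq> T \<and>
     (\<forall>S'. is_subalgebra N S' \<and> S' \<subseteq> T \<and> S \<subseteq> S' \<longrightarrow> S' = S)"

definition generic_alg :: "nat \<Rightarrow> nat \<Rightarrow> complex mat \<Rightarrow> complex mat set \<Rightarrow> bool" where
  "generic_alg n d M S \<longleftrightarrow> \<not> S \<subseteq> toeplitz_upper n d M \<and> \<not> S \<subseteq> toeplitz_lower n d M"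

definition block_gcd :: "nat \<Rightarrow> complex mat \<Rightarrow> complex poly \<Rightarrow> complex mat set \<Rightarrow> int \<Rightarrow> complex poly" where
  "block_gcd d M p S j = Gcd (insert p {b. \<exists>X\<in>S. mat_poly_eval d M b = toeplitz_block d X j})"

end

theory Submission imports Defs "HOL-Computational_Algebra.Fundamental_Theorem_Algebra" begin

lemma ev_pCons:
  assumes M: "M \<in> carrier_mat d d"
  shows "mat_poly_eval d M (pCons a q) = a \<cdot>\<^sub>m 1\<^sub>m d + M * mat_poly_eval d M q"
proof (cases "a = 0 \<and> q = 0")
  case True
  then show ?thesis using M by (auto simp: mat_poly_eval_def)
next
  case False
  then show ?thesis
    by (auto simp: mat_poly_eval_def fold_coeffs_pCons_coeff_not_0_eq fold_coeffs_pCons_not_0_0_eq)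
qed

lemma zero_smult_one[simp]: "(0::complex) \<cdot>\<^sub>m 1\<^sub>m d = 0\<^sub>m d d"
  by (rule eq_matI) auto

lemma ev_0[simp]: "mat_poly_eval d M 0 = 0\<^sub>m d d"
  by (simp add: mat_poly_eval_def)

lemma ev_carrier:
  assumes M: "M \<in> carrier_mat d d"
  shows "mat_poly_eval d M q \<in> carrier_mat d d"
proof (induct q rule: pCons_induct)
  case 0 then show ?case by simp
next
  case (pCons a q) then show ?case using M by (simp add: ev_pCons)
qed

lemma ev_add:
  assumes M: "M \<in> carrier_mat d d"
  shows "mat_poly_eval d M (q + r) = mat_poly_eval d M q + mat_poly_eval d M r"
proof (induct q r rule: poly_induct2)
  case 0 then show ?case using ev_carrier[OF M] by simp
next
  case (pCons a q b r)
  have c1: "mat_poly_eval d M q \<in> carrier_mat d d" "mat_poly_eval d M r \<in> carrier_mat d d"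
    using ev_carrier[OF M] by auto
  have "mat_poly_eval d M (pCons a q + pCons b r) = (a+b) \<cdot>\<^sub>m 1\<^sub>m d + M * (mat_poly_eval d M q + mat_poly_eval d M r)"
    using pCons M by (simp add: ev_pCons)
  also have "\<dots> = (a \<cdot>\<^sub>m 1\<^sub>m d + M * mat_poly_eval d M q) + (b \<cdot>\<^sub>m 1\<^sub>m d + M * mat_poly_eval d M r)"
    by (rule eq_matI) (use c1 M in \<open>auto simp: mult_add_distrib_mat add_smult_distrib_right_mat scalar_prod_add_distrib[of _ d] algebra_simps\<close>)
  finally show ?case using M by (simp add: ev_pCons)
qed

lemma ev_smult:
  assumes M: "M \<in> carrier_mat d d"
  shows "mat_poly_eval d M (Polynomial.smult c q) = c \<cdot>\<^sub>m mat_poly_eval d M q"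
proof (induct q rule: pCons_induct)
  case 0 then show ?case by simp
next
  case (pCons a q)
  have c1: "mat_poly_eval d M q \<in> carrier_mat d d" using ev_carrier[OF M] by auto
  show ?case using pCons M c1
    by (simp add: ev_pCons add_smult_distrib_left_mat mult_smult_distrib)
       (rule eq_matI, auto simp: algebra_simps)
qed

lemma ev_mult:
  assumes M: "M \<in> carrier_mat d d"
  shows "mat_poly_eval d M (q * r) = mat_poly_eval d M q * mat_poly_eval d M r"
proof (induct q rule: pCons_induct)
  case 0 then show ?case using ev_carrier[OF M] by (simp add: left_mult_zero_mat[of _ d d])
next
  case (pCons a q)
  have c1: "mat_poly_eval d M q \<in> carrier_mat d d" "mat_poly_eval d M r \<in> carrier_mat d d"
    "mat_poly_eval d M (q*r) \<in> carrier_mat d d"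
    using ev_carrier[OF M] by auto
  have "mat_poly_eval d M (pCons a q * r) = mat_poly_eval d M (Polynomial.smult a r + pCons 0 (q * r))"
    by simp
  also have "\<dots> = a \<cdot>\<^sub>m mat_poly_eval d M r + M * (mat_poly_eval d M q * mat_poly_eval d M r)"
    using M c1 pCons by (simp add: ev_add ev_smult ev_pCons)
  also have "\<dots> = (a \<cdot>\<^sub>m 1\<^sub>m d + M * mat_poly_eval d M q) * mat_poly_eval d M r"
  proof -
    have "(a \<cdot>\<^sub>m 1\<^sub>m d + M * mat_poly_eval d M q) * mat_poly_eval d M r
       = (a \<cdot>\<^sub>m 1\<^sub>m d) * mat_poly_eval d M r + (M * mat_poly_eval d M q) * mat_poly_eval d M r"
      by (rule add_mult_distrib_mat[of _ d d]) (use M c1 in auto)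
    also have "\<dots> = a \<cdot>\<^sub>m mat_poly_eval d M r + M * (mat_poly_eval d M q * mat_poly_eval d M r)"
      using M c1 by (simp add: mult_smult_assoc_mat[of _ d d])
    finally show ?thesis by simp
  qed
  finally show ?case using M by (simp add: ev_pCons)
qed

lemma ev_dvd:
  assumes M: "M \<in> carrier_mat d d" and mp: "is_min_poly d M p"
  shows "mat_poly_eval d M q = 0\<^sub>m d d \<longleftrightarrow> p dvd q"
proof
  have p0: "mat_poly_eval d M p = 0\<^sub>m d d" and mon: "monic p"
    and mn: "\<And>r. r \<noteq> 0 \<Longrightarrow> mat_poly_eval d M r = 0\<^sub>m d d \<Longrightarrow> degree p \<le> degree r"
    using mp unfolding is_min_poly_def by auto
  have pn0: "p \<noteq> 0" using mon by auto
  have c: "\<And>q. mat_poly_eval d M q \<in> carrier_mat d d" using ev_carrier[OF M] by auto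
  assume q0: "mat_poly_eval d M q = 0\<^sub>m d d"
  have "mat_poly_eval d M q = mat_poly_eval d M ((q div p) * p + q mod p)" by simp
  also have "\<dots> = mat_poly_eval d M (q div p) * mat_poly_eval d M p + mat_poly_eval d M (q mod p)"
    by (simp only: ev_add[OF M] ev_mult[OF M])
  finally have "mat_poly_eval d M q = mat_poly_eval d M (q div p) * mat_poly_eval d M p + mat_poly_eval d M (q mod p)" .
  then have "mat_poly_eval d M (q mod p) = 0\<^sub>m d d"
    using q0 p0 c by (simp add: right_mult_zero_mat[of _ d d])
  moreover have "q mod p \<noteq> 0 \<Longrightarrow> degree (q mod p) < degree p"
    using degree_mod_less[OF pn0] by auto
  ultimately have "q mod p = 0" using mn[of "q mod p"] by (meson not_less)
  then show "p dvd q" by auto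
next
  have p0: "mat_poly_eval d M p = 0\<^sub>m d d" using mp unfolding is_min_poly_def by auto
  assume "p dvd q"
  then obtain k where "q = p * k" by auto
  then show "mat_poly_eval d M q = 0\<^sub>m d d"
    using p0 ev_carrier[OF M] by (simp add: ev_mult[OF M] left_mult_zero_mat[of _ d d])
qed

lemma ev_eq_iff:
  assumes M: "M \<in> carrier_mat d d" and mp: "is_min_poly d M p"
  shows "mat_poly_eval d M a = mat_poly_eval d M b \<longleftrightarrow> p dvd (a - b)"
proof -
  have c: "\<And>q. mat_poly_eval d M q \<in> carrier_mat d d" using ev_carrier[OF M] by auto
  have e: "mat_poly_eval d M a = mat_poly_eval d M b + mat_poly_eval d M (a - b)"
  proof -
    have "mat_poly_eval d M a = mat_poly_eval d M (b + (a - b))" by simp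
    also have "\<dots> = mat_poly_eval d M b + mat_poly_eval d M (a - b)" by (rule ev_add[OF M])
    finally show ?thesis .
  qed
  show ?thesis
  proof
    assume H: "mat_poly_eval d M a = mat_poly_eval d M b"
    have "mat_poly_eval d M (a - b) = 0\<^sub>m d d"
    proof (rule eq_matI)
      fix i j assume ij: "i < dim_row (0\<^sub>m d d :: complex mat)" "j < dim_col (0\<^sub>m d d :: complex mat)"
      have "mat_poly_eval d M a $$ (i,j) = mat_poly_eval d M b $$ (i,j) + mat_poly_eval d M (a - b) $$ (i,j)"
        using e c[of a] c[of b] c[of "a-b"] ij by (metis carrier_matD index_add_mat(1) index_zero_mat(2,3))
      then show "mat_poly_eval d M (a - b) $$ (i,j) = 0\<^sub>m d d $$ (i,j)" using ij H by simp
    qed (use c in auto)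
    then show "p dvd (a - b)" using ev_dvd[OF M mp] by auto
  next
    assume "p dvd (a - b)"
    then have "mat_poly_eval d M (a - b) = 0\<^sub>m d d" using ev_dvd[OF M mp] by auto
    then show "mat_poly_eval d M a = mat_poly_eval d M b" using e c by simp
  qed
qed

lemma ev_sum_index:
  assumes M: "M \<in> carrier_mat d d" and "finite K" and "x < d" and "y < d"
  shows "mat_poly_eval d M (\<Sum>k\<in>K. f k) $$ (x,y) = (\<Sum>k\<in>K. mat_poly_eval d M (f k) $$ (x,y))"
  using assms(2)
proof (induct K rule: finite_induct)
  case empty then show ?case using assms by simp
next
  case (insert k K)
  have c: "\<And>q. mat_poly_eval d M q \<in> carrier_mat d d" using ev_carrier[OF M] by auto
  have "mat_poly_eval d M (\<Sum>k\<in>insert k K. f k) = mat_poly_eval d M (f k) + mat_poly_eval d M (\<Sum>k\<in>K. f k)"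
    using insert by (simp add: ev_add[OF M])
  then have "mat_poly_eval d M (\<Sum>k\<in>insert k K. f k) $$ (x,y) = mat_poly_eval d M (f k) $$ (x,y) + mat_poly_eval d M (\<Sum>k\<in>K. f k) $$ (x,y)"
    using c[of "\<Sum>k\<in>K. f k"] assms by (metis carrier_matD index_add_mat(1))
  then show ?case using insert by simp
qed


lemma BT_carrier[simp]: "block_toeplitz n d B \<in> carrier_mat (n*d) (n*d)"
  by (simp add: block_toeplitz_def)

lemma BT_dims[simp]: "dim_row (block_toeplitz n d B) = n*d" "dim_col (block_toeplitz n d B) = n*d"
  by (simp_all add: block_toeplitz_def)

lemma BT_index: "r < n*d \<Longrightarrow> c < n*d \<Longrightarrow>
  block_toeplitz n d B $$ (r,c) = B (int (r div d) - int (c div d)) $$ (r mod d, c mod d)"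
  by (simp add: block_toeplitz_def)

lemma div_bound: "r < n*d \<Longrightarrow> r div d < (n::nat)"
  by (simp add: less_mult_imp_div_less)

lemma blk_BT:
  assumes "B j \<in> carrier_mat d d" "\<bar>j\<bar> < int n"
  shows "toeplitz_block d (block_toeplitz n d B) j = B j"
proof (rule eq_matI)
  fix r c assume rc: "r < dim_row (B j)" "c < dim_col (B j)"
  then have rd: "r < d" "c < d" using assms by auto
  define a where "a = nat j"
  define b where "b = nat (- j)"
  have ab: "a < n" "b < n" "int a - int b = j" using assms(2) by (auto simp: a_def b_def)
  have "a*d + r < n*d"
  proof -
    have "a*d + r < (a+1)*d" using rd by simp
    also have "\<dots> \<le> n*d" using ab by (intro mult_right_mono) auto
    finally show ?thesis .
  qed
  moreover have "b*d + c < n*d"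
  proof -
    have "b*d + c < (b+1)*d" using rd by simp
    also have "\<dots> \<le> n*d" using ab by (intro mult_right_mono) auto
    finally show ?thesis .
  qed
  moreover have "(a*d + r) div d = a" "(a*d+r) mod d = r" "(b*d + c) div d = b" "(b*d+c) mod d = c"
    using rd by auto
  ultimately show "toeplitz_block d (block_toeplitz n d B) j $$ (r, c) = B j $$ (r, c)"
    using rd ab by (simp add: toeplitz_block_def BT_index a_def[symmetric] b_def[symmetric])
qed (use assms in \<open>auto simp: toeplitz_block_def\<close>)

lemma BT_cong:
  assumes "\<And>m. \<bar>m\<bar> < int n \<Longrightarrow> B m = B' m"
  shows "block_toeplitz n d B = block_toeplitz n d B'"
proof (rule eq_matI)
  fix r c assume "r < dim_row (block_toeplitz n d B')" "c < dim_col (block_toeplitz n d B')"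
  then have rc: "r < n*d" "c < n*d" by auto
  then have "r div d < n" "c div d < n" using div_bound by auto
  then have "\<bar>int (r div d) - int (c div d)\<bar> < int n" by auto
  then show "block_toeplitz n d B $$ (r,c) = block_toeplitz n d B' $$ (r,c)"
    using rc assms by (simp add: BT_index)
qed auto

lemma BT_add:
  assumes "\<And>m. B m \<in> carrier_mat d d" "\<And>m. B' m \<in> carrier_mat d d"
  shows "block_toeplitz n d B + block_toeplitz n d B' = block_toeplitz n d (\<lambda>m. B m + B' m)"
proof (rule eq_matI)
  fix r c assume "r < dim_row (block_toeplitz n d (\<lambda>m. B m + B' m))" "c < dim_col (block_toeplitz n d (\<lambda>m. B m + B' m))"
  then have rc: "r < n*d" "c < n*d" by auto
  then have "d > 0" by (cases d) auto
  then have "r mod d < d" "c mod d < d" by auto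
  then show "(block_toeplitz n d B + block_toeplitz n d B') $$ (r,c) = block_toeplitz n d (\<lambda>m. B m + B' m) $$ (r,c)"
    using rc by (simp add: BT_index carrier_matD[OF assms(1)] carrier_matD[OF assms(2)])
qed auto

lemma BT_smult:
  assumes "\<And>m. B m \<in> carrier_mat d d"
  shows "a \<cdot>\<^sub>m block_toeplitz n d B = block_toeplitz n d (\<lambda>m. a \<cdot>\<^sub>m B m)"
proof (rule eq_matI)
  fix r c assume "r < dim_row (block_toeplitz n d (\<lambda>m. a \<cdot>\<^sub>m B m))" "c < dim_col (block_toeplitz n d (\<lambda>m. a \<cdot>\<^sub>m B m))"
  then have rc: "r < n*d" "c < n*d" by auto
  then have "d > 0" by (cases d) auto
  then have "r mod d < d" "c mod d < d" by auto
  then show "(a \<cdot>\<^sub>m block_toeplitz n d B) $$ (r,c) = block_toeplitz n d (\<lambda>m. a \<cdot>\<^sub>m B m) $$ (r,c)"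
    using rc by (simp add: BT_index carrier_matD[OF assms(1)])
qed auto

lemma BT_zero: "block_toeplitz n d (\<lambda>m. 0\<^sub>m d d) = 0\<^sub>m (n*d) (n*d)"
proof (rule eq_matI)
  fix r c assume "r < dim_row (0\<^sub>m (n*d) (n*d) :: complex mat)" "c < dim_col (0\<^sub>m (n*d) (n*d) :: complex mat)"
  then have rc: "r < n*d" "c < n*d" by auto
  then have "d > 0" by (cases d) auto
  then have "r mod d < d" "c mod d < d" by auto
  then show "block_toeplitz n d (\<lambda>m. 0\<^sub>m d d) $$ (r,c) = (0\<^sub>m (n*d) (n*d) :: complex mat) $$ (r,c)"
    using rc by (simp add: BT_index)
qed auto

definition Gs :: "nat \<Rightarrow> (int \<Rightarrow> complex poly) \<Rightarrow> (int \<Rightarrow> complex poly) \<Rightarrow> int \<Rightarrow> int \<Rightarrow> complex poly" where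
  "Gs n \<alpha> \<beta> i j = (\<Sum>k<n. \<alpha> (i - int k) * \<beta> (int k - j))"

lemma sum_split_blocks:
  fixes g :: "nat \<Rightarrow> 'a::comm_monoid_add"
  shows "(\<Sum>t<n*d. g t) = (\<Sum>k<n. \<Sum>s<d. g (k*d + s))"
proof -
  have "(\<Sum>t<n*d. g t) = (\<Sum>k<n. sum g {k*d..<k*d+d})" by (rule sum.nat_group[symmetric])
  also have "\<dots> = (\<Sum>k<n. \<Sum>s<d. g (k*d + s))"
  proof (rule sum.cong[OF refl])
    fix k
    have "sum g {k*d..<k*d+d} = sum g {0+k*d..<d+k*d}" by (simp add: add.commute)
    also have "\<dots> = (\<Sum>s=0..<d. g (s + k*d))" by (rule sum.shift_bounds_nat_ivl)
    also have "\<dots> = (\<Sum>s<d. g (k*d + s))" by (simp add: atLeast0LessThan add.commute)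
    finally show "sum g {k*d..<k*d+d} = (\<Sum>s<d. g (k*d + s))" .
  qed
  finally show ?thesis .
qed

lemma BT_mult:
  assumes M: "M \<in> carrier_mat d d"
  shows "block_toeplitz n d (\<lambda>m. mat_poly_eval d M (\<alpha> m)) * block_toeplitz n d (\<lambda>m. mat_poly_eval d M (\<beta> m))
    = mat (n*d) (n*d) (\<lambda>(r,c). mat_poly_eval d M (Gs n \<alpha> \<beta> (int (r div d)) (int (c div d))) $$ (r mod d, c mod d))"
proof (rule eq_matI)
  fix r c assume "r < dim_row (mat (n*d) (n*d) (\<lambda>(r,c). mat_poly_eval d M (Gs n \<alpha> \<beta> (int (r div d)) (int (c div d))) $$ (r mod d, c mod d)))"
    "c < dim_col (mat (n*d) (n*d) (\<lambda>(r,c). mat_poly_eval d M (Gs n \<alpha> \<beta> (int (r div d)) (int (c div d))) $$ (r mod d, c mod d)))"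
  then have rc: "r < n*d" "c < n*d" by auto
  then have d0: "d > 0" by (cases d) auto
  then have md: "r mod d < d" "c mod d < d" by auto
  have c: "\<And>q. mat_poly_eval d M q \<in> carrier_mat d d" using ev_carrier[OF M] by auto
  define i where "i = int (r div d)"
  define j where "j = int (c div d)"
  let ?A = "block_toeplitz n d (\<lambda>m. mat_poly_eval d M (\<alpha> m))"
  let ?B = "block_toeplitz n d (\<lambda>m. mat_poly_eval d M (\<beta> m))"
  have "(?A * ?B) $$ (r,c) = (\<Sum>t<n*d. ?A $$ (r,t) * ?B $$ (t,c))"
    using rc by (simp add: scalar_prod_def atLeast0LessThan)
  also have "\<dots> = (\<Sum>k<n. \<Sum>s<d. ?A $$ (r,k*d+s) * ?B $$ (k*d+s,c))"
    by (rule sum_split_blocks)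
  also have "\<dots> = (\<Sum>k<n. \<Sum>s<d. mat_poly_eval d M (\<alpha> (i - int k)) $$ (r mod d, s) * mat_poly_eval d M (\<beta> (int k - j)) $$ (s, c mod d))"
  proof (intro sum.cong refl)
    fix k s assume ks: "k \<in> {..<n}" "s \<in> {..<d}"
    have "k*d + s < (k+1)*d" using ks by simp
    also have "\<dots> \<le> n*d" using ks by (intro mult_right_mono) auto
    finally have ksd: "k*d + s < n*d" .
    have "(k*d+s) div d = k" "(k*d+s) mod d = s" using ks by auto
    then show "?A $$ (r,k*d+s) * ?B $$ (k*d+s,c) = mat_poly_eval d M (\<alpha> (i - int k)) $$ (r mod d, s) * mat_poly_eval d M (\<beta> (int k - j)) $$ (s, c mod d)"
      using rc ksd by (simp add: BT_index i_def j_def)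
  qed
  also have "\<dots> = (\<Sum>k<n. (mat_poly_eval d M (\<alpha> (i - int k)) * mat_poly_eval d M (\<beta> (int k - j))) $$ (r mod d, c mod d))"
  proof (intro sum.cong refl)
    fix k
    show "(\<Sum>s<d. mat_poly_eval d M (\<alpha> (i - int k)) $$ (r mod d, s) * mat_poly_eval d M (\<beta> (int k - j)) $$ (s, c mod d))
      = (mat_poly_eval d M (\<alpha> (i - int k)) * mat_poly_eval d M (\<beta> (int k - j))) $$ (r mod d, c mod d)"
      using md c[of "\<alpha> (i - int k)"] c[of "\<beta> (int k - j)"]
      by (simp add: scalar_prod_def atLeast0LessThan)
  qed
  also have "\<dots> = (\<Sum>k<n. mat_poly_eval d M (\<alpha> (i - int k) * \<beta> (int k - j)) $$ (r mod d, c mod d))"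
    by (simp add: ev_mult[OF M])
  also have "\<dots> = mat_poly_eval d M (Gs n \<alpha> \<beta> i j) $$ (r mod d, c mod d)"
    unfolding Gs_def by (rule ev_sum_index[OF M _ md, symmetric]) simp
  finally show "(?A * ?B) $$ (r,c) = mat (n*d) (n*d) (\<lambda>(r,c). mat_poly_eval d M (Gs n \<alpha> \<beta> (int (r div d)) (int (c div d))) $$ (r mod d, c mod d)) $$ (r,c)"
    using rc by (simp add: i_def j_def)
qed auto


lemma sum_shift_int:
  fixes f :: "int \<Rightarrow> 'a::comm_ring"
  shows "(\<Sum>k<n. f (int k - 1)) + f (int n - 1) = f (-1) + (\<Sum>k<n. f (int k))"
proof (induct n)
  case 0 then show ?case by simp
next
  case (Suc n)
  have "(\<Sum>k<Suc n. f (int k - 1)) + f (int (Suc n) - 1) = ((\<Sum>k<n. f (int k - 1)) + f (int n - 1)) + f (int n)"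
    by simp
  also have "\<dots> = f (-1) + (\<Sum>k<Suc n. f (int k))" using Suc by simp
  finally show ?case .
qed

lemma Gs_shift:
  "Gs n \<alpha> \<beta> (i+1) (j+1) + \<alpha> (i + 1 - int n) * \<beta> (int n - 1 - j) = \<alpha> (i+1) * \<beta> (-1 - j) + Gs n \<alpha> \<beta> i j"
proof -
  define F where "F k = \<alpha> (i - k) * \<beta> (k - j)" for k
  have "(\<Sum>k<n. F (int k - 1)) + F (int n - 1) = F (-1) + (\<Sum>k<n. F (int k))" by (rule sum_shift_int)
  moreover have "(\<Sum>k<n. F (int k - 1)) = Gs n \<alpha> \<beta> (i+1) (j+1)"
    unfolding Gs_def F_def by (intro sum.cong refl) (simp add: algebra_simps)
  moreover have "(\<Sum>k<n. F (int k)) = Gs n \<alpha> \<beta> i j" unfolding Gs_def F_def by simp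
  moreover have "F (int n - 1) = \<alpha> (i + 1 - int n) * \<beta> (int n - 1 - j)" unfolding F_def by (simp add: algebra_simps)
  moreover have "F (-1) = \<alpha> (i+1) * \<beta> (-1 - j)" unfolding F_def by (simp add: algebra_simps)
  ultimately show ?thesis by simp
qed

definition gam :: "nat \<Rightarrow> (int \<Rightarrow> complex poly) \<Rightarrow> (int \<Rightarrow> complex poly) \<Rightarrow> int \<Rightarrow> complex poly" where
  "gam n \<alpha> \<beta> m = (if m \<ge> 0 then Gs n \<alpha> \<beta> m 0 else Gs n \<alpha> \<beta> 0 (-m))"

lemma Gs_diag_step:
  assumes iso: "\<And>a c. 1 \<le> a \<Longrightarrow> a \<le> int n - 1 \<Longrightarrow> 1 \<le> c \<Longrightarrow> c \<le> int n - 1 \<Longrightarrow>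
      p dvd (\<alpha> a * \<beta> (c - int n) - \<alpha> (a - int n) * \<beta> c)"
  shows "0 \<le> i \<Longrightarrow> 0 \<le> j \<Longrightarrow> i + int k \<le> int n - 1 \<Longrightarrow> j + int k \<le> int n - 1 \<Longrightarrow>
    p dvd (Gs n \<alpha> \<beta> (i + int k) (j + int k) - Gs n \<alpha> \<beta> i j)"
proof (induct k)
  case 0 then show ?case by simp
next
  case (Suc k)
  have ih: "p dvd (Gs n \<alpha> \<beta> (i + int k) (j + int k) - Gs n \<alpha> \<beta> i j)" using Suc by simp
  have e: "Gs n \<alpha> \<beta> (i + int k + 1) (j + int k + 1) - Gs n \<alpha> \<beta> (i + int k) (j + int k)
      = \<alpha> (i + int k + 1) * \<beta> ((int n - 1 - (j + int k)) - int n) - \<alpha> ((i + int k + 1) - int n) * \<beta> (int n - 1 - (j + int k))"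
    using Gs_shift[of n \<alpha> \<beta> "i + int k" "j + int k"] by (simp add: algebra_simps)
  have "p dvd \<alpha> (i + int k + 1) * \<beta> ((int n - 1 - (j + int k)) - int n) - \<alpha> ((i + int k + 1) - int n) * \<beta> (int n - 1 - (j + int k))"
    using Suc by (intro iso) auto
  then have "p dvd (Gs n \<alpha> \<beta> (i + int k + 1) (j + int k + 1) - Gs n \<alpha> \<beta> (i + int k) (j + int k))"
    using e by simp
  then have "p dvd (Gs n \<alpha> \<beta> (i + int k + 1) (j + int k + 1) - Gs n \<alpha> \<beta> (i + int k) (j + int k))
     + (Gs n \<alpha> \<beta> (i + int k) (j + int k) - Gs n \<alpha> \<beta> i j)"
    using ih by (rule dvd_add)
  then show ?case by (simp add: algebra_simps)
qed

lemma Gs_diag: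
  assumes iso: "\<And>a c. 1 \<le> a \<Longrightarrow> a \<le> int n - 1 \<Longrightarrow> 1 \<le> c \<Longrightarrow> c \<le> int n - 1 \<Longrightarrow>
      p dvd (\<alpha> a * \<beta> (c - int n) - \<alpha> (a - int n) * \<beta> c)"
    and ij: "0 \<le> i" "0 \<le> j" "i \<le> int n - 1" "j \<le> int n - 1"
  shows "p dvd (Gs n \<alpha> \<beta> i j - gam n \<alpha> \<beta> (i - j))"
proof (cases "j \<le> i")
  case True
  have "p dvd (Gs n \<alpha> \<beta> ((i - j) + int (nat j)) (0 + int (nat j)) - Gs n \<alpha> \<beta> (i - j) 0)"
    using ij True by (intro Gs_diag_step[where p=p and \<alpha>=\<alpha> and \<beta>=\<beta>, OF iso]) auto
  then show ?thesis using True ij by (simp add: gam_def)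
next
  case False
  have "p dvd (Gs n \<alpha> \<beta> (0 + int (nat i)) ((j - i) + int (nat i)) - Gs n \<alpha> \<beta> 0 (j - i))"
    using ij False by (intro Gs_diag_step[where p=p and \<alpha>=\<alpha> and \<beta>=\<beta>, OF iso]) auto
  then show ?thesis using False ij by (simp add: gam_def)
qed

lemma Gs_pair1:
  assumes "n = Suc m"
  shows "Gs n \<alpha> \<beta> k 0 = \<beta> 0 * \<alpha> k + (\<Sum>l<m. \<alpha> (k - (int l + 1)) * \<beta> (int l + 1))"
  unfolding Gs_def assms by (subst sum.lessThan_Suc_shift) (simp add: algebra_simps)

lemma Gs_pair2:
  assumes "n = Suc m"
  shows "Gs n \<alpha> \<beta> (k - 1) (int n - 1) = \<beta> 0 * \<alpha> (k - int n) + (\<Sum>l<m. \<alpha> (k - (int l + 1)) * \<beta> (int l + 1 - int n))"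
  unfolding Gs_def assms by (subst sum.lessThan_Suc) (simp add: algebra_simps)


inductive_set Nsp :: "complex poly \<Rightarrow> (complex poly \<times> complex poly) set \<Rightarrow> (complex poly \<times> complex poly) set"
  for p Gen where
  gen: "v \<in> Gen \<Longrightarrow> v \<in> Nsp p Gen"
| zero: "(0,0) \<in> Nsp p Gen"
| add: "(a,b) \<in> Nsp p Gen \<Longrightarrow> (c,e) \<in> Nsp p Gen \<Longrightarrow> (a+c, b+e) \<in> Nsp p Gen"
| scale: "(a,b) \<in> Nsp p Gen \<Longrightarrow> (r*a, r*b) \<in> Nsp p Gen"
| modp: "(a,b) \<in> Nsp p Gen \<Longrightarrow> p dvd (a' - a) \<Longrightarrow> p dvd (b' - b) \<Longrightarrow> (a',b') \<in> Nsp p Gen"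

lemma Nsp_iso1:
  assumes G: "\<And>a b c e. (a,b) \<in> Gen \<Longrightarrow> (c,e) \<in> Gen \<Longrightarrow> p dvd (a*e - b*c)"
    and ab: "(a,b) \<in> Gen"
  shows "w \<in> Nsp p Gen \<Longrightarrow> p dvd (a * snd w - b * fst w)"
proof (induct w rule: Nsp.induct)
  case (gen v) then show ?case using G[of a b "fst v" "snd v"] ab by simp
next
  case zero then show ?case by simp
next
  case (add c1 e1 c2 e2)
  have "a * (e1 + e2) - b * (c1 + c2) = (a*e1 - b*c1) + (a*e2 - b*c2)" by (simp add: algebra_simps)
  then show ?case using add by simp
next
  case (scale c e r)
  have "a * (r*e) - b * (r*c) = r * (a*e - b*c)" by (simp add: algebra_simps)
  then show ?case using scale by simp
next
  case (modp c e c' e')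
  have "a * e' - b * c' = (a*e - b*c) + a * (e' - e) - b * (c' - c)" by (simp add: algebra_simps)
  then show ?case using modp by simp
qed

lemma Nsp_iso:
  assumes G: "\<And>a b c e. (a,b) \<in> Gen \<Longrightarrow> (c,e) \<in> Gen \<Longrightarrow> p dvd (a*e - b*c)"
    and w: "w \<in> Nsp p Gen"
  shows "v \<in> Nsp p Gen \<Longrightarrow> p dvd (fst v * snd w - snd v * fst w)"
proof (induct v rule: Nsp.induct)
  case (gen v) then show ?case using Nsp_iso1[OF G, where a="fst v" and b="snd v" and w=w] w by simp
next
  case zero then show ?case by simp
next
  case (add c1 e1 c2 e2)
  have "(c1 + c2) * snd w - (e1 + e2) * fst w = (c1 * snd w - e1 * fst w) + (c2 * snd w - e2 * fst w)" by (simp add: algebra_simps)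
  then show ?case using add by simp
next
  case (scale c e r)
  have "(r*c) * snd w - (r*e) * fst w = r * (c * snd w - e * fst w)" by (simp add: algebra_simps)
  then show ?case using scale by simp
next
  case (modp c e c' e')
  have "c' * snd w - e' * fst w = (c * snd w - e * fst w) + (c' - c) * snd w - (e' - e) * fst w" by (simp add: algebra_simps)
  then show ?case using modp by simp
qed

lemma Nsp_sum:
  assumes "finite L" "\<And>l. l \<in> L \<Longrightarrow> (f l, g l) \<in> Nsp p Gen"
  shows "(\<Sum>l\<in>L. f l, \<Sum>l\<in>L. g l) \<in> Nsp p Gen"
  using assms
proof (induct L rule: finite_induct)
  case empty then show ?case by (simp add: Nsp.zero)
next
  case (insert x F)
  then show ?case by (simp add: Nsp.add)
qed

definition Fset :: "nat \<Rightarrow> nat \<Rightarrow> complex mat \<Rightarrow> (complex poly \<times> complex poly) set \<Rightarrow> complex mat set" where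
  "Fset n d M N = {X. \<exists>\<alpha>. X = block_toeplitz n d (\<lambda>m. mat_poly_eval d M (\<alpha> m)) \<and>
      (\<forall>a. 1 \<le> a \<and> a \<le> int n - 1 \<longrightarrow> (\<alpha> a, \<alpha> (a - int n)) \<in> N)}"

lemma Fset_toeplitz: "Fset n d M N \<subseteq> toeplitz_set n d M"
  unfolding Fset_def toeplitz_set_def polys_in_def by blast

lemma BT_prod_gam:
  assumes M: "M \<in> carrier_mat d d" and mp: "is_min_poly d M p"
    and iso: "\<And>a c. 1 \<le> a \<Longrightarrow> a \<le> int n - 1 \<Longrightarrow> 1 \<le> c \<Longrightarrow> c \<le> int n - 1 \<Longrightarrow>
      p dvd (\<alpha> a * \<beta> (c - int n) - \<alpha> (a - int n) * \<beta> c)"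
  shows "block_toeplitz n d (\<lambda>m. mat_poly_eval d M (\<alpha> m)) * block_toeplitz n d (\<lambda>m. mat_poly_eval d M (\<beta> m))
    = block_toeplitz n d (\<lambda>m. mat_poly_eval d M (gam n \<alpha> \<beta> m))"
  unfolding BT_mult[OF M]
proof (rule eq_matI)
  fix r c assume "r < dim_row (block_toeplitz n d (\<lambda>m. mat_poly_eval d M (gam n \<alpha> \<beta> m)))"
    "c < dim_col (block_toeplitz n d (\<lambda>m. mat_poly_eval d M (gam n \<alpha> \<beta> m)))"
  then have rc: "r < n*d" "c < n*d" by auto
  then have "r div d < n" "c div d < n" using div_bound by auto
  then have "p dvd (Gs n \<alpha> \<beta> (int (r div d)) (int (c div d)) - gam n \<alpha> \<beta> (int (r div d) - int (c div d)))"
    by (intro Gs_diag[where p=p and \<alpha>=\<alpha> and \<beta>=\<beta>, OF iso]) auto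
  then have "mat_poly_eval d M (Gs n \<alpha> \<beta> (int (r div d)) (int (c div d))) = mat_poly_eval d M (gam n \<alpha> \<beta> (int (r div d) - int (c div d)))"
    using ev_eq_iff[OF M mp] by blast
  then show "mat (n * d) (n * d) (\<lambda>(r, c). mat_poly_eval d M (Gs n \<alpha> \<beta> (int (r div d)) (int (c div d))) $$ (r mod d, c mod d)) $$ (r, c) =
         block_toeplitz n d (\<lambda>m. mat_poly_eval d M (gam n \<alpha> \<beta> m)) $$ (r, c)"
    using rc by (simp add: BT_index)
qed auto

lemma Fset_subalg:
  assumes M: "M \<in> carrier_mat d d" and mp: "is_min_poly d M p" and n1: "n \<ge> 1"
    and G: "\<And>a b c e. (a,b) \<in> Gen \<Longrightarrow> (c,e) \<in> Gen \<Longrightarrow> p dvd (a*e - b*c)"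
  shows "is_subalgebra (n*d) (Fset n d M (Nsp p Gen))"
proof -
  let ?N = "Nsp p Gen"
  have c: "\<And>q. mat_poly_eval d M q \<in> carrier_mat d d" using ev_carrier[OF M] by auto
  have carr: "Fset n d M ?N \<subseteq> carrier_mat (n*d) (n*d)" unfolding Fset_def by auto
  have zero: "0\<^sub>m (n*d) (n*d) \<in> Fset n d M ?N"
    unfolding Fset_def
    by (rule CollectI, rule exI[of _ "\<lambda>m. 0"]) (simp add: BT_zero Nsp.zero)
  have add: "A + B \<in> Fset n d M ?N" if hA: "A \<in> Fset n d M ?N" and hB: "B \<in> Fset n d M ?N" for A B
  proof -
    obtain \<alpha> where a: "A = block_toeplitz n d (\<lambda>m. mat_poly_eval d M (\<alpha> m))"
      "\<forall>a. 1 \<le> a \<and> a \<le> int n - 1 \<longrightarrow> (\<alpha> a, \<alpha> (a - int n)) \<in> ?N" using hA unfolding Fset_def by blast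
    obtain \<beta> where b: "B = block_toeplitz n d (\<lambda>m. mat_poly_eval d M (\<beta> m))"
      "\<forall>a. 1 \<le> a \<and> a \<le> int n - 1 \<longrightarrow> (\<beta> a, \<beta> (a - int n)) \<in> ?N" using hB unfolding Fset_def by blast
    have "A + B = block_toeplitz n d (\<lambda>m. mat_poly_eval d M (\<alpha> m + \<beta> m))"
      unfolding a b by (subst BT_add) (auto simp: c ev_add[OF M])
    then show ?thesis unfolding Fset_def using a(2) b(2) by (auto intro!: exI[of _ "\<lambda>m. \<alpha> m + \<beta> m"] Nsp.add)
  qed
  have smul: "x \<cdot>\<^sub>m A \<in> Fset n d M ?N" if hA: "A \<in> Fset n d M ?N" for A x
  proof -
    obtain \<alpha> where a: "A = block_toeplitz n d (\<lambda>m. mat_poly_eval d M (\<alpha> m))"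
      "\<forall>a. 1 \<le> a \<and> a \<le> int n - 1 \<longrightarrow> (\<alpha> a, \<alpha> (a - int n)) \<in> ?N" using hA unfolding Fset_def by blast
    have "x \<cdot>\<^sub>m A = block_toeplitz n d (\<lambda>m. mat_poly_eval d M ([:x:] * \<alpha> m))"
      unfolding a by (subst BT_smult) (auto simp: c ev_smult[OF M])
    then show ?thesis unfolding Fset_def using a(2) by (auto intro!: exI[of _ "\<lambda>m. [:x:] * \<alpha> m"] Nsp.scale)
  qed
  have mul: "A * B \<in> Fset n d M ?N" if hA: "A \<in> Fset n d M ?N" and hB: "B \<in> Fset n d M ?N" for A B
  proof -
    obtain \<alpha> where a: "A = block_toeplitz n d (\<lambda>m. mat_poly_eval d M (\<alpha> m))"
      "\<forall>a. 1 \<le> a \<and> a \<le> int n - 1 \<longrightarrow> (\<alpha> a, \<alpha> (a - int n)) \<in> ?N" using hA unfolding Fset_def by blast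
    obtain \<beta> where b: "B = block_toeplitz n d (\<lambda>m. mat_poly_eval d M (\<beta> m))"
      "\<forall>a. 1 \<le> a \<and> a \<le> int n - 1 \<longrightarrow> (\<beta> a, \<beta> (a - int n)) \<in> ?N" using hB unfolding Fset_def by blast
    have iso: "p dvd (\<alpha> a * \<beta> (c - int n) - \<alpha> (a - int n) * \<beta> c)"
      if "1 \<le> a" "a \<le> int n - 1" "1 \<le> c" "c \<le> int n - 1" for a c
      using Nsp_iso[OF G, where w="(\<beta> c, \<beta> (c - int n))" and v="(\<alpha> a, \<alpha> (a - int n))"] a(2) b(2) that by auto
    have prod: "A * B = block_toeplitz n d (\<lambda>m. mat_poly_eval d M (gam n \<alpha> \<beta> m))"
      unfolding a(1) b(1) by (rule BT_prod_gam[where \<alpha>=\<alpha> and \<beta>=\<beta>, OF M mp iso])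
    obtain m where nm: "n = Suc m" using n1 by (cases n) auto
    have pairs: "(gam n \<alpha> \<beta> k, gam n \<alpha> \<beta> (k - int n)) \<in> ?N" if k: "1 \<le> k" "k \<le> int n - 1" for k
    proof -
      have s: "(\<Sum>l<m. \<alpha> (k - (int l + 1)) * \<beta> (int l + 1), \<Sum>l<m. \<alpha> (k - (int l + 1)) * \<beta> (int l + 1 - int n)) \<in> ?N"
      proof (rule Nsp_sum)
        fix l assume "l \<in> {..<m}"
        then have "1 \<le> int l + 1 \<and> int l + 1 \<le> int n - 1" using nm by auto
        then have "(\<beta> (int l + 1), \<beta> (int l + 1 - int n)) \<in> ?N" using b(2) by blast
        then show "(\<alpha> (k - (int l + 1)) * \<beta> (int l + 1), \<alpha> (k - (int l + 1)) * \<beta> (int l + 1 - int n)) \<in> ?N"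
          by (rule Nsp.scale)
      qed simp
      have t: "(\<beta> 0 * \<alpha> k, \<beta> 0 * \<alpha> (k - int n)) \<in> ?N" using a(2) k by (auto intro: Nsp.scale)
      have "(Gs n \<alpha> \<beta> k 0, Gs n \<alpha> \<beta> (k - 1) (int n - 1)) \<in> ?N"
        unfolding Gs_pair1[OF nm] Gs_pair2[OF nm] using Nsp.add[OF t s] .
      moreover have "p dvd (Gs n \<alpha> \<beta> (k - 1) (int n - 1) - gam n \<alpha> \<beta> (k - 1 - (int n - 1)))"
        using k by (intro Gs_diag[where p=p and \<alpha>=\<alpha> and \<beta>=\<beta>, OF iso]) auto
      moreover have "gam n \<alpha> \<beta> k = Gs n \<alpha> \<beta> k 0" using k by (simp add: gam_def)
      moreover have "k - 1 - (int n - 1) = k - int n" by simp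
      ultimately have N1: "(Gs n \<alpha> \<beta> k 0, Gs n \<alpha> \<beta> (k - 1) (int n - 1)) \<in> ?N"
        and d1: "p dvd (Gs n \<alpha> \<beta> (k - 1) (int n - 1) - gam n \<alpha> \<beta> (k - int n))"
        and e1: "gam n \<alpha> \<beta> k = Gs n \<alpha> \<beta> k 0" by metis+
      have d2: "p dvd (gam n \<alpha> \<beta> (k - int n) - Gs n \<alpha> \<beta> (k - 1) (int n - 1))"
        using d1 by (metis dvd_minus_iff minus_diff_eq)
      show ?thesis
        by (rule Nsp.modp[OF N1]) (simp_all add: e1 d2)
    qed
    show ?thesis unfolding Fset_def using prod pairs by auto
  qed
  show ?thesis unfolding is_subalgebra_def using carr zero add mul smul by blast
qed


lemma coprime_noroot:
  fixes a p :: "complex poly"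
  assumes p0: "p \<noteq> 0" and nr: "\<And>z. poly p z = 0 \<Longrightarrow> poly a z \<noteq> 0"
  shows "coprime a p"
proof (rule ccontr)
  assume nc: "\<not> coprime a p"
  define h where "h = gcd a p"
  have h0: "h \<noteq> 0" using p0 by (simp add: h_def)
  have nu: "\<not> is_unit h" using nc by (metis h_def is_unit_gcd)
  have "degree h \<noteq> 0" using is_unit_iff_degree[OF h0] nu by blast
  then have "\<not> constant (poly h)" by (simp add: constant_degree)
  then obtain z where z: "poly h z = 0" using fundamental_theorem_of_algebra by blast
  have "h dvd a" "h dvd p" by (simp_all add: h_def)
  then have "poly a z = 0" "poly p z = 0" using z by (auto elim!: dvdE)
  then show False using nr by auto
qed

lemma Gcd_ideal:
  fixes J :: "complex poly set"
  assumes pJ: "p \<in> J" and p0: "p \<noteq> 0"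
    and addJ: "\<And>x y. x \<in> J \<Longrightarrow> y \<in> J \<Longrightarrow> x + y \<in> J"
    and mulJ: "\<And>r x. x \<in> J \<Longrightarrow> r * x \<in> J"
  shows "Gcd (insert p J) \<in> J"
proof -
  obtain g where g: "g \<in> J \<and> g \<noteq> 0" "\<forall>y. y \<in> J \<and> y \<noteq> 0 \<longrightarrow> degree g \<le> degree y"
    using ex_has_least_nat[of "\<lambda>x. x \<in> J \<and> x \<noteq> 0" p degree] pJ p0 by blast
  have gd: "g dvd x" if "x \<in> J" for x
  proof (rule ccontr)
    assume "\<not> g dvd x"
    then have nz: "x mod g \<noteq> 0" by (simp add: mod_eq_0_iff_dvd)
    have "x mod g = x + (- (x div g)) * g" by (simp add: mod_div_mult_eq[symmetric] algebra_simps)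
    then have "x mod g \<in> J" using addJ mulJ that g by metis
    then have "degree g \<le> degree (x mod g)" using g nz by blast
    moreover have "degree (x mod g) < degree g" using degree_mod_less[of g x] g nz by blast
    ultimately show False by simp
  qed
  have "g dvd Gcd (insert p J)" by (rule Gcd_greatest) (use gd pJ in auto)
  then obtain k where "Gcd (insert p J) = g * k" unfolding dvd_def by blast
  then show ?thesis using mulJ g by (metis mult.commute)
qed

lemma dvd_cong4:
  fixes p :: "complex poly"
  assumes "p dvd (x - x')" "p dvd (y - y')" "p dvd (z - z')" "p dvd (w - w')" "p dvd (x'*y' - z'*w')"
  shows "p dvd (x*y - z*w)"
proof -
  have "x*y - z*w = (x'*y' - z'*w') + (x - x') * y + x' * (y - y') - (z - z') * w - z' * (w - w')"
    by (simp add: algebra_simps)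
  then show ?thesis using assms by (simp add: dvd_add dvd_diff dvd_mult dvd_mult2)
qed

lemma rep_toeplitz:
  assumes "X \<in> toeplitz_set n d M"
  shows "\<exists>\<alpha>. X = block_toeplitz n d (\<lambda>m. mat_poly_eval d M (\<alpha> m))"
proof -
  obtain B where B: "X = block_toeplitz n d B" "\<forall>m. B m \<in> polys_in d M"
    using assms unfolding toeplitz_set_def by blast
  have "\<forall>m. \<exists>q. B m = mat_poly_eval d M q" using B(2) unfolding polys_in_def by blast
  then obtain \<alpha> where "\<forall>m. B m = mat_poly_eval d M (\<alpha> m)" by metis
  then show ?thesis using B(1) by (metis (no_types, lifting) ext)
qed

lemma blk_rep:
  assumes M: "M \<in> carrier_mat d d" and "\<bar>j\<bar> < int n"
  shows "toeplitz_block d (block_toeplitz n d (\<lambda>m. mat_poly_eval d M (\<alpha> m))) j = mat_poly_eval d M (\<alpha> j)"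
  by (rule blk_BT) (use assms ev_carrier[OF M] in auto)

lemma prod_iso:
  assumes M: "M \<in> carrier_mat d d" and mp: "is_min_poly d M p"
    and T: "block_toeplitz n d (\<lambda>m. mat_poly_eval d M (\<alpha> m)) * block_toeplitz n d (\<lambda>m. mat_poly_eval d M (\<beta> m)) \<in> toeplitz_set n d M"
    and ac: "1 \<le> a" "a \<le> int n - 1" "1 \<le> c" "c \<le> int n - 1"
  shows "p dvd (\<alpha> a * \<beta> (c - int n) - \<alpha> (a - int n) * \<beta> c)"
proof -
  obtain \<gamma> where g: "block_toeplitz n d (\<lambda>m. mat_poly_eval d M (\<alpha> m)) * block_toeplitz n d (\<lambda>m. mat_poly_eval d M (\<beta> m))
     = block_toeplitz n d (\<lambda>m. mat_poly_eval d M (\<gamma> m))" using rep_toeplitz[OF T] by blast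
  have key: "mat_poly_eval d M (Gs n \<alpha> \<beta> (int i) (int j)) = mat_poly_eval d M (\<gamma> (int i - int j))"
    if ij: "i < n" "j < n" for i j
  proof (rule eq_matI)
    fix x y assume xy: "x < dim_row (mat_poly_eval d M (\<gamma> (int i - int j)))" "y < dim_col (mat_poly_eval d M (\<gamma> (int i - int j)))"
    then have xy': "x < d" "y < d" using ev_carrier[OF M, of "\<gamma> (int i - int j)"] by auto
    have "i*d + x < (i+1)*d" using xy' by simp
    also have "\<dots> \<le> n*d" using ij by (intro mult_right_mono) auto
    finally have r: "i*d + x < n*d" .
    have "j*d + y < (j+1)*d" using xy' by simp
    also have "\<dots> \<le> n*d" using ij by (intro mult_right_mono) auto
    finally have c: "j*d + y < n*d" .
    have dm: "(i*d + x) div d = i" "(i*d+x) mod d = x" "(j*d + y) div d = j" "(j*d+y) mod d = y" using xy' by auto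
    have "(block_toeplitz n d (\<lambda>m. mat_poly_eval d M (\<alpha> m)) * block_toeplitz n d (\<lambda>m. mat_poly_eval d M (\<beta> m))) $$ (i*d+x, j*d+y)
      = mat_poly_eval d M (Gs n \<alpha> \<beta> (int i) (int j)) $$ (x,y)"
      unfolding BT_mult[OF M] using r c dm by simp
    moreover have "block_toeplitz n d (\<lambda>m. mat_poly_eval d M (\<gamma> m)) $$ (i*d+x, j*d+y) = mat_poly_eval d M (\<gamma> (int i - int j)) $$ (x,y)"
      using r c dm by (simp add: BT_index)
    ultimately show "mat_poly_eval d M (Gs n \<alpha> \<beta> (int i) (int j)) $$ (x,y) = mat_poly_eval d M (\<gamma> (int i - int j)) $$ (x,y)"
      using g by simp
  qed (simp_all add: carrier_matD[OF ev_carrier[OF M]])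
  define i where "i = nat (a - 1)"
  define j where "j = nat (int n - 1 - c)"
  have ij: "i + 1 < n" "j + 1 < n" "int i = a - 1" "int j = int n - 1 - c" using ac by (auto simp: i_def j_def)
  have "mat_poly_eval d M (Gs n \<alpha> \<beta> (int (i+1)) (int (j+1))) = mat_poly_eval d M (\<gamma> (int (i+1) - int (j+1)))"
    using key[of "i+1" "j+1"] ij(1,2) by blast
  moreover have "mat_poly_eval d M (Gs n \<alpha> \<beta> (int i) (int j)) = mat_poly_eval d M (\<gamma> (int i - int j))"
    using key[of i j] ij(1,2) by simp
  ultimately have "mat_poly_eval d M (Gs n \<alpha> \<beta> (int i + 1) (int j + 1)) = mat_poly_eval d M (Gs n \<alpha> \<beta> (int i) (int j))"
    by (simp add: add.commute)
  then have "p dvd (Gs n \<alpha> \<beta> (int i + 1) (int j + 1) - Gs n \<alpha> \<beta> (int i) (int j))"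
    using ev_eq_iff[OF M mp] by blast
  moreover have "Gs n \<alpha> \<beta> (int i + 1) (int j + 1) - Gs n \<alpha> \<beta> (int i) (int j)
     = \<alpha> (int i + 1) * \<beta> (-1 - int j) - \<alpha> (int i + 1 - int n) * \<beta> (int n - 1 - int j)"
    using Gs_shift[of n \<alpha> \<beta> "int i" "int j"] by (simp add: algebra_simps)
  moreover have "int i + 1 = a" "-1 - int j = c - int n" "int i + 1 - int n = a - int n" "int n - 1 - int j = c"
    using ij by auto
  ultimately show ?thesis by simp
qed


lemma S_pairs_iso:
  assumes M: "M \<in> carrier_mat d d" and mp: "is_min_poly d M p"
    and sub: "is_subalgebra (n*d) S" and ST: "S \<subseteq> toeplitz_set n d M"
    and X: "X \<in> S" and Y: "Y \<in> S"
    and ac: "1 \<le> a" "a \<le> int n - 1" "1 \<le> c" "c \<le> int n - 1"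
    and e1: "mat_poly_eval d M a1 = toeplitz_block d X a" and e2: "mat_poly_eval d M b1 = toeplitz_block d X (a - int n)"
    and e3: "mat_poly_eval d M c1 = toeplitz_block d Y c" and e4: "mat_poly_eval d M f1 = toeplitz_block d Y (c - int n)"
  shows "p dvd (a1 * f1 - b1 * c1)"
proof -
  obtain \<alpha> where \<alpha>: "X = block_toeplitz n d (\<lambda>m. mat_poly_eval d M (\<alpha> m))" using rep_toeplitz X ST by blast
  obtain \<beta> where \<beta>: "Y = block_toeplitz n d (\<lambda>m. mat_poly_eval d M (\<beta> m))" using rep_toeplitz Y ST by blast
  have "X * Y \<in> S" using sub X Y unfolding is_subalgebra_def by blast
  then have T: "X * Y \<in> toeplitz_set n d M" using ST by blast
  have i: "p dvd (\<alpha> a * \<beta> (c - int n) - \<alpha> (a - int n) * \<beta> c)"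
    by (rule prod_iso[OF M mp _ ac]) (use T \<alpha> \<beta> in simp)
  have "mat_poly_eval d M a1 = mat_poly_eval d M (\<alpha> a)" using e1 \<alpha> blk_rep[OF M] ac by simp
  then have d1: "p dvd (a1 - \<alpha> a)" using ev_eq_iff[OF M mp] by blast
  have "mat_poly_eval d M b1 = mat_poly_eval d M (\<alpha> (a - int n))" using e2 \<alpha> blk_rep[OF M] ac by simp
  then have d2: "p dvd (b1 - \<alpha> (a - int n))" using ev_eq_iff[OF M mp] by blast
  have "mat_poly_eval d M c1 = mat_poly_eval d M (\<beta> c)" using e3 \<beta> blk_rep[OF M] ac by simp
  then have d3: "p dvd (c1 - \<beta> c)" using ev_eq_iff[OF M mp] by blast
  have "mat_poly_eval d M f1 = mat_poly_eval d M (\<beta> (c - int n))" using e4 \<beta> blk_rep[OF M] ac by simp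
  then have d4: "p dvd (f1 - \<beta> (c - int n))" using ev_eq_iff[OF M mp] by blast
  show ?thesis by (rule dvd_cong4[OF d1 d4 d2 d3 i])
qed

definition Eel :: "nat \<Rightarrow> nat \<Rightarrow> complex mat \<Rightarrow> int \<Rightarrow> complex poly \<times> complex poly \<Rightarrow> complex mat" where
  "Eel n d M a v = block_toeplitz n d (\<lambda>m. mat_poly_eval d M (if m = a then fst v else if m = a - int n then snd v else 0))"

lemma Eel_in:
  assumes "v \<in> Nsp p Gen" "1 \<le> a" "a \<le> int n - 1"
  shows "Eel n d M a v \<in> Fset n d M (Nsp p Gen)"
  unfolding Fset_def Eel_def
proof (rule CollectI, rule exI, rule conjI[OF refl], intro allI impI)
  fix a' assume a': "1 \<le> a' \<and> a' \<le> int n - 1"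
  show "((if a' = a then fst v else if a' = a - int n then snd v else 0),
         (if a' - int n = a then fst v else if a' - int n = a - int n then snd v else 0)) \<in> Nsp p Gen"
  proof (cases "a' = a")
    case True then show ?thesis using assms by simp
  next
    case False then show ?thesis using assms a' by (simp add: Nsp.zero)
  qed
qed

lemma Eel_blk:
  assumes M: "M \<in> carrier_mat d d" and "1 \<le> a" "a \<le> int n - 1"
  shows "toeplitz_block d (Eel n d M a v) a = mat_poly_eval d M (fst v)"
    "toeplitz_block d (Eel n d M a v) (a - int n) = mat_poly_eval d M (snd v)"
  unfolding Eel_def using assms by (subst blk_rep[OF M]; simp)+

definition Aall :: "nat \<Rightarrow> nat \<Rightarrow> complex mat \<Rightarrow> complex poly \<times> complex poly \<Rightarrow> complex mat" where
  "Aall n d M v = block_toeplitz n d (\<lambda>m. mat_poly_eval d M (if 1 \<le> m \<and> m \<le> int n - 1 then fst v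
       else if 1 - int n \<le> m \<and> m \<le> -1 then snd v else 0))"

lemma Aall_in:
  assumes "v \<in> Nsp p Gen"
  shows "Aall n d M v \<in> Fset n d M (Nsp p Gen)"
  unfolding Fset_def Aall_def
proof (rule CollectI, rule exI, rule conjI[OF refl], intro allI impI)
  fix a' assume a': "1 \<le> a' \<and> a' \<le> int n - 1"
  then show "((if 1 \<le> a' \<and> a' \<le> int n - 1 then fst v else if 1 - int n \<le> a' \<and> a' \<le> -1 then snd v else 0),
         (if 1 \<le> a' - int n \<and> a' - int n \<le> int n - 1 then fst v else if 1 - int n \<le> a' - int n \<and> a' - int n \<le> -1 then snd v else 0)) \<in> Nsp p Gen"
    using assms by simp
qed

lemma Aall_blk:
  assumes M: "M \<in> carrier_mat d d" and "1 \<le> j" "j \<le> int n - 1"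
  shows "toeplitz_block d (Aall n d M v) j = mat_poly_eval d M (fst v)"
    "toeplitz_block d (Aall n d M v) (- j) = mat_poly_eval d M (snd v)"
  unfolding Aall_def using assms by (subst blk_rep[OF M]; simp)+


theorem lemma7p2:
  fixes n d :: nat and M :: "complex mat" and p :: "complex poly" and \<B> :: "complex mat set"
  assumes "n \<ge> 2"
    and "M \<in> carrier_mat d d"
    and "nonderogatory d M"
    and "is_min_poly d M p"
    and "maximal_subalgebra_in (n*d) (toeplitz_set n d M) \<B>"
    and "generic_alg n d M \<B>"
  shows
    "(\<forall>j::int. 1 \<le> \<bar>j\<bar> \<and> \<bar>j\<bar> \<le> int n - 1 \<longrightarrow> (\<exists>B\<in>\<B>. toeplitz_block d B j \<noteq> 0\<^sub>m d d))
     \<and> (\<forall>j::int. 1 \<le> j \<and> j \<le> int n - 1 \<longrightarrow>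
          block_gcd d M p \<B> j = block_gcd d M p \<B> 1 \<and> block_gcd d M p \<B> (-j) = block_gcd d M p \<B> (-1))
     \<and> (\<forall>B\<in>\<B>. \<forall>j::int. 1 \<le> j \<and> j \<le> int n - 1 \<longrightarrow>
          (\<exists>b. toeplitz_block d B j = mat_poly_eval d M (block_gcd d M p \<B> 1) * mat_poly_eval d M b)
        \<and> (\<exists>b. toeplitz_block d B (-j) = mat_poly_eval d M (block_gcd d M p \<B> (-1)) * mat_poly_eval d M b))
     \<and> (\<exists>A\<in>\<B>. \<forall>j::int. 1 \<le> j \<and> j \<le> int n - 1 \<longrightarrow>
          (\<exists>a. toeplitz_block d A j = mat_poly_eval d M (block_gcd d M p \<B> 1) * mat_poly_eval d M a
               \<and> coprime a p)
        \<and> (\<exists>a. toeplitz_block d A (-j) = mat_poly_eval d M (block_gcd d M p \<B> (-1)) * mat_poly_eval d M a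
               \<and> coprime a p))
     \<and> (block_gcd d M p \<B> 1 * block_gcd d M p \<B> (-1) dvd p)"
proof -
  note n2 = assms(1) and M = assms(2) and mp = assms(4) and mx = assms(5) and gen = assms(6)
  define S where "S = \<B>"
  have pn0: "p \<noteq> 0" using mp unfolding is_min_poly_def by auto
  have sub: "is_subalgebra (n*d) S" and ST: "S \<subseteq> toeplitz_set n d M"
    and maxS: "\<And>S'. is_subalgebra (n*d) S' \<Longrightarrow> S' \<subseteq> toeplitz_set n d M \<Longrightarrow> S \<subseteq> S' \<Longrightarrow> S' = S"
    using mx unfolding maximal_subalgebra_in_def S_def by blast+
  have ev0: "mat_poly_eval d M q = 0\<^sub>m d d \<longleftrightarrow> p dvd q" for q using ev_dvd[OF M mp] .
  have eveq: "mat_poly_eval d M a = mat_poly_eval d M b \<longleftrightarrow> p dvd (a - b)" for a b using ev_eq_iff[OF M mp] .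
  define Js where "Js = {b. \<exists>X\<in>S. \<exists>a. 1 \<le> a \<and> a \<le> int n - 1 \<and> mat_poly_eval d M b = toeplitz_block d X a}"
  define g where "g = Gcd (insert p Js)"
  define q0 where "q0 = p div g"
  have gp: "g * q0 = p" unfolding q0_def g_def by (simp add: Gcd_dvd)
  have gJs: "g dvd b" if "b \<in> Js" for b unfolding g_def using that by (meson Gcd_dvd insertI2)
  define Gen where "Gen = {(b1,b2). \<exists>X\<in>S. \<exists>a. 1 \<le> a \<and> a \<le> int n - 1 \<and>
      mat_poly_eval d M b1 = toeplitz_block d X a \<and> mat_poly_eval d M b2 = toeplitz_block d X (a - int n)} \<union> {(0, q0)}"
  have Giso: "p dvd (a*e - b*c)" if ab: "(a,b) \<in> Gen" and ce: "(c,e) \<in> Gen" for a b c e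
  proof -
    consider (SS) "(a,b) \<noteq> (0,q0)" "(c,e) \<noteq> (0,q0)" | (SU) "(a,b) \<noteq> (0,q0)" "(c,e) = (0,q0)"
      | (US) "(a,b) = (0,q0)" "(c,e) \<noteq> (0,q0)" | (UU) "(a,b) = (0,q0)" "(c,e) = (0,q0)" by blast
    then show ?thesis
    proof cases
      case SS
      then obtain X a0 Y c0 where X: "X \<in> S" "1 \<le> a0" "a0 \<le> int n - 1" "mat_poly_eval d M a = toeplitz_block d X a0"
          "mat_poly_eval d M b = toeplitz_block d X (a0 - int n)"
        and Y: "Y \<in> S" "1 \<le> c0" "c0 \<le> int n - 1" "mat_poly_eval d M c = toeplitz_block d Y c0"
          "mat_poly_eval d M e = toeplitz_block d Y (c0 - int n)"
        using ab ce unfolding Gen_def by auto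
      show ?thesis by (rule S_pairs_iso[OF M mp sub ST X(1) Y(1) X(2,3) Y(2,3) X(4,5) Y(4,5)])
    next
      case SU
      then have "a \<in> Js" using ab unfolding Gen_def Js_def by auto
      then obtain k where "a = g * k" using gJs by (auto elim!: dvdE)
      then have "a*e - b*c = k * p" using SU gp by (simp add: algebra_simps)
      then show ?thesis by simp
    next
      case US
      then have "c \<in> Js" using ce unfolding Gen_def Js_def by auto
      then obtain k where "c = g * k" using gJs by (auto elim!: dvdE)
      then have "a*e - b*c = - (k * p)" using US gp by (simp add: algebra_simps)
      then show ?thesis by simp
    next
      case UU then show ?thesis by simp
    qed
  qed
  define N where "N = Nsp p Gen"
  define F where "F = Fset n d M N"
  have Fsub: "is_subalgebra (n*d) F" unfolding F_def N_def
    by (rule Fset_subalg[OF M mp _ Giso]) (use n2 in auto)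
  have FT: "F \<subseteq> toeplitz_set n d M" unfolding F_def by (rule Fset_toeplitz)
  have SF: "S \<subseteq> F"
  proof
    fix X assume X: "X \<in> S"
    obtain \<alpha> where \<alpha>: "X = block_toeplitz n d (\<lambda>m. mat_poly_eval d M (\<alpha> m))" using rep_toeplitz X ST by blast
    have "(\<alpha> a, \<alpha> (a - int n)) \<in> N" if "1 \<le> a" "a \<le> int n - 1" for a
    proof -
      have "(\<alpha> a, \<alpha> (a - int n)) \<in> Gen" unfolding Gen_def
        using X that \<alpha> blk_rep[OF M] by (auto intro!: bexI[of _ X] exI[of _ a])
      then show ?thesis unfolding N_def by (rule Nsp.gen)
    qed
    then show "X \<in> F" unfolding F_def Fset_def using \<alpha> by blast
  qed
  have FS: "F = S" using maxS[OF Fsub FT SF] .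
  have Nzero: "(0,0) \<in> N" unfolding N_def by (rule Nsp.zero)
  have Nmod: "(a',b') \<in> N" if "(a,b) \<in> N" "p dvd (a' - a)" "p dvd (b' - b)" for a b a' b'
    using that unfolding N_def by (blast intro: Nsp.modp)
  have Nadd: "(a+c, b+e) \<in> N" if "(a,b) \<in> N" "(c,e) \<in> N" for a b c e
    using that unfolding N_def by (blast intro: Nsp.add)
  have Nscale: "(r*a, r*b) \<in> N" if "(a,b) \<in> N" for a b r
    using that unfolding N_def by (blast intro: Nsp.scale)
  have EelS: "Eel n d M a v \<in> S" if "v \<in> N" "1 \<le> a" "a \<le> int n - 1" for a v
    using Eel_in[of v p Gen a n d M] that FS unfolding F_def N_def by blast
  have AallS: "Aall n d M v \<in> S" if "v \<in> N" for v
    using Aall_in[of v p Gen n d M] that FS unfolding F_def N_def by blast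
  have repF: "\<exists>\<alpha>. X = block_toeplitz n d (\<lambda>m. mat_poly_eval d M (\<alpha> m)) \<and>
      (\<forall>a. 1 \<le> a \<and> a \<le> int n - 1 \<longrightarrow> (\<alpha> a, \<alpha> (a - int n)) \<in> N)" if "X \<in> S" for X
    using that FS unfolding F_def Fset_def by blast
  define J1 where "J1 = {b. \<exists>c. (b,c) \<in> N}"
  define J2 where "J2 = {c. \<exists>b. (b,c) \<in> N}"
  have set1: "{b. \<exists>X\<in>S. mat_poly_eval d M b = toeplitz_block d X j} = J1" if j: "1 \<le> j" "j \<le> int n - 1" for j
  proof (rule equalityI; rule subsetI)
    fix b assume "b \<in> {b. \<exists>X\<in>S. mat_poly_eval d M b = toeplitz_block d X j}"
    then obtain X where X: "X \<in> S" "mat_poly_eval d M b = toeplitz_block d X j" by blast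
    obtain \<alpha> where \<alpha>: "X = block_toeplitz n d (\<lambda>m. mat_poly_eval d M (\<alpha> m))"
      "\<forall>a. 1 \<le> a \<and> a \<le> int n - 1 \<longrightarrow> (\<alpha> a, \<alpha> (a - int n)) \<in> N" using repF[OF X(1)] by blast
    have "mat_poly_eval d M b = mat_poly_eval d M (\<alpha> j)" using X(2) \<alpha>(1) blk_rep[OF M] j by simp
    then have "p dvd (b - \<alpha> j)" using eveq by blast
    then have "(b, \<alpha> (j - int n)) \<in> N" using Nmod[of "\<alpha> j" "\<alpha> (j - int n)"] \<alpha>(2) j by simp
    then show "b \<in> J1" unfolding J1_def by blast
  next
    fix b assume "b \<in> J1"
    then obtain c where bc: "(b,c) \<in> N" unfolding J1_def by blast
    have "Eel n d M j (b,c) \<in> S" using EelS[OF bc j] .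
    moreover have "toeplitz_block d (Eel n d M j (b,c)) j = mat_poly_eval d M b" using Eel_blk[OF M j] by simp
    ultimately show "b \<in> {b. \<exists>X\<in>S. mat_poly_eval d M b = toeplitz_block d X j}" by force
  qed
  have set2: "{b. \<exists>X\<in>S. mat_poly_eval d M b = toeplitz_block d X (-j)} = J2" if j: "1 \<le> j" "j \<le> int n - 1" for j
  proof (rule equalityI; rule subsetI)
    have a: "1 \<le> int n - j" "int n - j \<le> int n - 1" "int n - j - int n = - j" using j by auto
    {
      fix b assume "b \<in> {b. \<exists>X\<in>S. mat_poly_eval d M b = toeplitz_block d X (-j)}"
      then obtain X where X: "X \<in> S" "mat_poly_eval d M b = toeplitz_block d X (-j)" by blast
      obtain \<alpha> where \<alpha>: "X = block_toeplitz n d (\<lambda>m. mat_poly_eval d M (\<alpha> m))"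
        "\<forall>a. 1 \<le> a \<and> a \<le> int n - 1 \<longrightarrow> (\<alpha> a, \<alpha> (a - int n)) \<in> N" using repF[OF X(1)] by blast
      have "mat_poly_eval d M b = mat_poly_eval d M (\<alpha> (-j))" using X(2) \<alpha>(1) blk_rep[OF M] j by simp
      then have "p dvd (b - \<alpha> (-j))" using eveq by blast
      moreover have "(\<alpha> (int n - j), \<alpha> (-j)) \<in> N" using \<alpha>(2) a by force
      ultimately have "(\<alpha> (int n - j), b) \<in> N" using Nmod[of "\<alpha> (int n - j)" "\<alpha> (-j)" "\<alpha> (int n - j)" b] by simp
      then show "b \<in> J2" unfolding J2_def by blast
    }
    {
      fix c assume "c \<in> J2"
      then obtain b where bc: "(b,c) \<in> N" unfolding J2_def by blast
      have "Eel n d M (int n - j) (b,c) \<in> S" using EelS[OF bc a(1,2)] .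
      moreover have "toeplitz_block d (Eel n d M (int n - j) (b,c)) (-j) = mat_poly_eval d M c"
        using Eel_blk(2)[OF M a(1,2)] a(3) by simp
      ultimately show "c \<in> {b. \<exists>X\<in>S. mat_poly_eval d M b = toeplitz_block d X (-j)}" by force
    }
  qed
  define sp where "sp = Gcd (insert p J1)"
  define sm where "sm = Gcd (insert p J2)"
  have n1: "1 \<le> int n - 1" using n2 by simp
  have bg1: "block_gcd d M p \<B> j = sp" if "1 \<le> j" "j \<le> int n - 1" for j
    unfolding block_gcd_def sp_def S_def[symmetric] using set1[OF that] by simp
  have bg2: "block_gcd d M p \<B> (-j) = sm" if "1 \<le> j" "j \<le> int n - 1" for j
    unfolding block_gcd_def sm_def S_def[symmetric] using set2[OF that] by simp
  have bgp: "block_gcd d M p \<B> 1 = sp" using bg1[of 1] n1 by simp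
  have bgm: "block_gcd d M p \<B> (-1) = sm" using bg2[of 1] n1 by simp
  have JsJ1: "Js = J1"
  proof
    show "Js \<subseteq> J1" unfolding Js_def using set1 by blast
    show "J1 \<subseteq> Js" unfolding Js_def using set1[of 1] n1 by blast
  qed
  have gsp: "g = sp" unfolding g_def sp_def JsJ1 ..
  have pJ1: "p \<in> J1" unfolding J1_def using Nmod[OF Nzero, of p 0] by auto
  have pJ2: "p \<in> J2" unfolding J2_def using Nmod[OF Nzero, of 0 p] by auto
  have spJ1: "sp \<in> J1" unfolding sp_def
    by (rule Gcd_ideal[OF pJ1 pn0]) (auto simp: J1_def intro: Nadd Nscale)
  have smJ2: "sm \<in> J2" unfolding sm_def
    by (rule Gcd_ideal[OF pJ2 pn0]) (auto simp: J2_def intro: Nadd Nscale)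
  have spd: "sp dvd b" if "b \<in> J1" for b unfolding sp_def using that by (meson Gcd_dvd insertI2)
  have smd: "sm dvd b" if "b \<in> J2" for b unfolding sm_def using that by (meson Gcd_dvd insertI2)
  have exp: "\<exists>v\<in>N. \<not> p dvd fst v"
  proof (rule ccontr)
    assume "\<not> (\<exists>v\<in>N. \<not> p dvd fst v)"
    then have all: "\<And>v. v \<in> N \<Longrightarrow> p dvd fst v" by blast
    have "S \<subseteq> toeplitz_upper n d M"
    proof
      fix X assume X: "X \<in> S"
      obtain \<alpha> where \<alpha>: "X = block_toeplitz n d (\<lambda>m. mat_poly_eval d M (\<alpha> m))"
        "\<forall>a. 1 \<le> a \<and> a \<le> int n - 1 \<longrightarrow> (\<alpha> a, \<alpha> (a - int n)) \<in> N" using repF[OF X] by blast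
      define B where "B m = (if m \<ge> 1 then 0\<^sub>m d d else mat_poly_eval d M (\<alpha> m))" for m
      have "X = block_toeplitz n d B" unfolding \<alpha>(1)
      proof (rule BT_cong)
        fix m :: int assume "\<bar>m\<bar> < int n"
        then show "mat_poly_eval d M (\<alpha> m) = B m"
          using \<alpha>(2) all[of "(\<alpha> m, \<alpha> (m - int n))"] ev0 unfolding B_def by auto
      qed
      moreover have "\<forall>m. B m \<in> polys_in d M" unfolding B_def polys_in_def
        by (auto intro: exI[of _ 0])
      moreover have "\<forall>i\<ge>1. B i = 0\<^sub>m d d" unfolding B_def by auto
      ultimately show "X \<in> toeplitz_upper n d M" unfolding toeplitz_upper_def by blast
    qed
    then show False using gen unfolding generic_alg_def S_def by blast
  qed
  have exm: "\<exists>v\<in>N. \<not> p dvd snd v"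
  proof (rule ccontr)
    assume "\<not> (\<exists>v\<in>N. \<not> p dvd snd v)"
    then have all: "\<And>v. v \<in> N \<Longrightarrow> p dvd snd v" by blast
    have "S \<subseteq> toeplitz_lower n d M"
    proof
      fix X assume X: "X \<in> S"
      obtain \<alpha> where \<alpha>: "X = block_toeplitz n d (\<lambda>m. mat_poly_eval d M (\<alpha> m))"
        "\<forall>a. 1 \<le> a \<and> a \<le> int n - 1 \<longrightarrow> (\<alpha> a, \<alpha> (a - int n)) \<in> N" using repF[OF X] by blast
      define B where "B m = (if m \<le> -1 then 0\<^sub>m d d else mat_poly_eval d M (\<alpha> m))" for m
      have "X = block_toeplitz n d B" unfolding \<alpha>(1)
      proof (rule BT_cong)
        fix m :: int assume m: "\<bar>m\<bar> < int n"
        show "mat_poly_eval d M (\<alpha> m) = B m"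
        proof (cases "m \<le> -1")
          case True
          have "1 \<le> m + int n \<and> m + int n \<le> int n - 1" using m True by auto
          then have "(\<alpha> (m + int n), \<alpha> (m + int n - int n)) \<in> N" using \<alpha>(2) by blast
          then have "p dvd \<alpha> m" using all by force
          then show ?thesis using True ev0 unfolding B_def by auto
        next
          case False then show ?thesis unfolding B_def by auto
        qed
      qed
      moreover have "\<forall>m. B m \<in> polys_in d M" unfolding B_def polys_in_def
        by (auto intro: exI[of _ 0])
      moreover have "\<forall>i\<le>-1. B i = 0\<^sub>m d d" unfolding B_def by auto
      ultimately show "X \<in> toeplitz_lower n d M" unfolding toeplitz_lower_def by blast
    qed
    then show False using gen unfolding generic_alg_def S_def by blast
  qed
  have P1: "\<forall>j::int. 1 \<le> \<bar>j\<bar> \<and> \<bar>j\<bar> \<le> int n - 1 \<longrightarrow> (\<exists>B\<in>\<B>. toeplitz_block d B j \<noteq> 0\<^sub>m d d)"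
  proof (intro allI impI)
    fix j :: int assume j: "1 \<le> \<bar>j\<bar> \<and> \<bar>j\<bar> \<le> int n - 1"
    show "\<exists>B\<in>\<B>. toeplitz_block d B j \<noteq> 0\<^sub>m d d"
    proof (cases "j \<ge> 1")
      case True
      obtain v where v: "v \<in> N" "\<not> p dvd fst v" using exp by blast
      have jj: "1 \<le> j" "j \<le> int n - 1" using j True by auto
      have "Eel n d M j v \<in> S" by (rule EelS[OF v(1) jj])
      moreover have "toeplitz_block d (Eel n d M j v) j \<noteq> 0\<^sub>m d d"
        using Eel_blk(1)[OF M jj] v(2) ev0 by simp
      ultimately show ?thesis unfolding S_def by blast
    next
      case False
      obtain v where v: "v \<in> N" "\<not> p dvd snd v" using exm by blast
      have jj: "1 \<le> j + int n" "j + int n \<le> int n - 1" "j + int n - int n = j" using j False by auto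
      have "Eel n d M (j + int n) v \<in> S" by (rule EelS[OF v(1) jj(1,2)])
      moreover have "toeplitz_block d (Eel n d M (j + int n) v) j \<noteq> 0\<^sub>m d d"
        using Eel_blk(2)[OF M jj(1,2)] jj(3) v(2) ev0 by simp
      ultimately show ?thesis unfolding S_def by blast
    qed
  qed
  have P2: "\<forall>j::int. 1 \<le> j \<and> j \<le> int n - 1 \<longrightarrow>
          block_gcd d M p \<B> j = block_gcd d M p \<B> 1 \<and> block_gcd d M p \<B> (-j) = block_gcd d M p \<B> (-1)"
    using bg1 bg2 bgp bgm by simp
  have P3: "\<forall>B\<in>\<B>. \<forall>j::int. 1 \<le> j \<and> j \<le> int n - 1 \<longrightarrow>
          (\<exists>b. toeplitz_block d B j = mat_poly_eval d M (block_gcd d M p \<B> 1) * mat_poly_eval d M b)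
        \<and> (\<exists>b. toeplitz_block d B (-j) = mat_poly_eval d M (block_gcd d M p \<B> (-1)) * mat_poly_eval d M b)"
  proof (intro ballI allI impI conjI)
    fix B j assume B: "B \<in> \<B>" and j: "1 \<le> j \<and> j \<le> int n - 1"
    obtain \<alpha> where \<alpha>: "B = block_toeplitz n d (\<lambda>m. mat_poly_eval d M (\<alpha> m))"
      using repF B unfolding S_def by blast
    have "toeplitz_block d B j = mat_poly_eval d M (\<alpha> j)" using \<alpha> blk_rep[OF M] j by simp
    then have "\<alpha> j \<in> {b. \<exists>X\<in>S. mat_poly_eval d M b = toeplitz_block d X j}"
      using B unfolding S_def by force
    then have "\<alpha> j \<in> J1" using set1 j by blast
    then obtain k where k: "\<alpha> j = sp * k" using spd by (auto elim!: dvdE)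
    show "\<exists>b. toeplitz_block d B j = mat_poly_eval d M (block_gcd d M p \<B> 1) * mat_poly_eval d M b"
      using \<alpha> blk_rep[OF M] j k bgp by (auto simp: ev_mult[OF M])
    have "toeplitz_block d B (-j) = mat_poly_eval d M (\<alpha> (-j))" using \<alpha> blk_rep[OF M] j by simp
    then have "\<alpha> (-j) \<in> {b. \<exists>X\<in>S. mat_poly_eval d M b = toeplitz_block d X (-j)}"
      using B unfolding S_def by force
    then have "\<alpha> (-j) \<in> J2" using set2 j by blast
    then obtain k' where k': "\<alpha> (-j) = sm * k'" using smd by (auto elim!: dvdE)
    show "\<exists>b. toeplitz_block d B (-j) = mat_poly_eval d M (block_gcd d M p \<B> (-1)) * mat_poly_eval d M b"
      using \<alpha> blk_rep[OF M] j k' bgm by (auto simp: ev_mult[OF M])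
  qed
  obtain t where t: "(sp, t) \<in> N" using spJ1 unfolding J1_def by blast
  obtain r where r: "(r, sm) \<in> N" using smJ2 unfolding J2_def by blast
  have "t \<in> J2" using t unfolding J2_def by blast
  then obtain t' where t': "t = sm * t'" using smd by (auto elim!: dvdE)
  have "r \<in> J1" using r unfolding J1_def by blast
  then obtain r' where r': "r = sp * r'" using spd by (auto elim!: dvdE)
  define Ex where "Ex = (\<lambda>z. - poly t' z) ` {z. poly p z = 0} \<union> (\<lambda>z. - 1 / poly r' z) ` {z. poly p z = 0}"
  have "finite Ex" unfolding Ex_def using poly_roots_finite[OF pn0] by simp
  then obtain c :: complex where c: "c \<notin> Ex" using ex_new_if_finite[OF infinite_UNIV_char_0] by blast
  have c1: "poly (1 + [:c:] * r') z \<noteq> 0" if "poly p z = 0" for z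
  proof
    assume h: "poly (1 + [:c:] * r') z = 0"
    then have "1 + c * poly r' z = 0" by simp
    then have rz: "poly r' z \<noteq> 0" by auto
    then have "c = - 1 / poly r' z" using \<open>1 + c * poly r' z = 0\<close>
      by (simp add: field_simps eq_neg_iff_add_eq_0 add.commute)
    note rz this
    then show False using c that unfolding Ex_def by auto
  qed
  have c2: "poly (t' + [:c:]) z \<noteq> 0" if "poly p z = 0" for z
  proof
    assume h: "poly (t' + [:c:]) z = 0"
    then have "c = - poly t' z" by (simp add: algebra_simps eq_neg_iff_add_eq_0)
    then show False using c that unfolding Ex_def by auto
  qed
  define v where "v = (sp * (1 + [:c:] * r'), sm * (t' + [:c:]))"
  have vN: "v \<in> N"
  proof -
    have "(sp + [:c:] * r, t + [:c:] * sm) \<in> N" using Nadd[OF t Nscale[OF r]] .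
    moreover have "sp + [:c:] * r = sp * (1 + [:c:] * r')" "t + [:c:] * sm = sm * (t' + [:c:])"
      using r' t' by (simp_all add: algebra_simps)
    ultimately show ?thesis unfolding v_def by simp
  qed
  have P4: "\<exists>A\<in>\<B>. \<forall>j::int. 1 \<le> j \<and> j \<le> int n - 1 \<longrightarrow>
          (\<exists>a. toeplitz_block d A j = mat_poly_eval d M (block_gcd d M p \<B> 1) * mat_poly_eval d M a
               \<and> coprime a p)
        \<and> (\<exists>a. toeplitz_block d A (-j) = mat_poly_eval d M (block_gcd d M p \<B> (-1)) * mat_poly_eval d M a
               \<and> coprime a p)"
  proof (rule bexI[of _ "Aall n d M v"], intro allI impI conjI)
    show "Aall n d M v \<in> \<B>" using AallS[OF vN] unfolding S_def .
    fix j :: int assume j: "1 \<le> j \<and> j \<le> int n - 1"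
    show "\<exists>a. toeplitz_block d (Aall n d M v) j = mat_poly_eval d M (block_gcd d M p \<B> 1) * mat_poly_eval d M a \<and> coprime a p"
      using Aall_blk(1)[OF M, of j n v] j bgp c1 coprime_noroot[OF pn0]
      by (intro exI[of _ "1 + [:c:] * r'"]) (simp add: v_def ev_mult[OF M])
    show "\<exists>a. toeplitz_block d (Aall n d M v) (-j) = mat_poly_eval d M (block_gcd d M p \<B> (-1)) * mat_poly_eval d M a \<and> coprime a p"
      using Aall_blk(2)[OF M, of j n v] j bgm c2 coprime_noroot[OF pn0]
      by (intro exI[of _ "t' + [:c:]"]) (simp add: v_def ev_mult[OF M])
  qed
  have "(0, q0) \<in> N" unfolding N_def Gen_def by (rule Nsp.gen) simp
  then have "q0 \<in> J2" unfolding J2_def by blast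
  then have "sm dvd q0" by (rule smd)
  then have "sp * sm dvd sp * q0" by (rule mult_dvd_mono[OF dvd_refl])
  then have P5: "block_gcd d M p \<B> 1 * block_gcd d M p \<B> (-1) dvd p" using gp gsp bgp bgm by metis
  show ?thesis using P1 P2 P3 P4 P5 by blast
qed

end
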